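(* Assume one of the following sets of hypotheses: (i) $\mathcal A$ is convex and closed, $\mathcal P$ is convex and closed, $V_0$ is convex and lower semicontinuous, $V_1$ is superlinear and upper semicontinuous, and $\mathcal L$ is a linear subspace; (ii) $\mathcal A$ is closed, $\mathcal P$ is closed, $V_0$ is lower semicontinuous, $V_1$ is anti-star shaped and upper semicontinuous, and $\mathcal L=\{0\}$; (iii) $\mathcal A$ is closed, $\mathcal P$ is compact, $V_0$ is lower semicontinuous, $V_1$ is upper semicontinuous, and $\mathcal L=\{0\}$. Then $\mathcal C$ is closed in $\mathcal X\times\mathbb R$ (product topology) and $\rho$ is lower semicontinuous. Moreover, for every $X\in\mathcal X$ with $\rho(X)\in\mathbb R$ the infimum defining $\rho(X)$ is attained: $\rho(X)=\min\{V_0(x): x\in\mathcal P,\ X+V_1(x)\in\mathcal A\}$.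
   Context: Standing setup: Let $\mathcal{X}$ be a real topological vector space partially ordered by a convex cone $\mathcal{X}_+\subset\mathcal X$; write $X\ge Y$ iff $X-Y\in\mathcal X_+$. Fix $N\in\mathbb N$ and: a set $\mathcal P\subset\mathbb R^N$ with $0\in\mathcal P$; a function $V_0:\mathbb R^N\to\mathbb R$ with $V_0(0)=0$ and $V_0(x)\ge -V_0(-x)$ for all $x\in\mathbb R^N$; a map $V_1:\mathbb R^N\to\mathcal X$ with $V_1(0)=0$ and $V_1(x)\le -V_1(-x)$ for all $x\in\mathbb R^N$; a set $\mathcal A\subset\mathcal X$ with $0\in\mathcal A$ and $\mathcal A+\mathcal X_+\subset\mathcal A$. The risk measure is $\rho:\mathcal X\to[-\infty,\infty]$, $\rho(X)=\inf\{V_0(x): x\in\mathcal P,\ X+V_1(x)\in\mathcal A\}$, with $\inf\emptyset=+\infty$. $V_1$ is superlinear if it is concave and positively homogeneous; anti-star shaped if $V_1(\lambda x)\ge\lambda V_1(x)$ for all $\lambda\in[0,1]$, $x\in\mathbb R^N$. $V_1$ is upper semicontinuous at $x$ if for every neighborhood $\mathcal U$ of $V_1(x)$ there exists a neighborhood $\mathcal V$ of $x$ with $V_1(\mathcal V)\subset\mathcal U-\mathcal X_+$, and upper semicontinuous if this holds at every $x$. Asymptotic notions: for a nonempty set $C$ in a topological vector space, $C^\infty=\{X:\exists\text{ nets }(X_\alpha)\subset C,\ (\lambda_\alpha)\subset[0,\infty),\ \lambda_\alpha\to0,\ \lambda_\alpha X_\alpha\to X\}$. For $f:\mathbb R^N\to\mathbb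 R$, its asymptotic function $f^\infty:\mathbb R^N\to[-\infty,\infty]$ is the function whose epigraph $\{(x,m)\in\mathbb R^N\times\mathbb R: f^\infty(x)\le m\}$ equals $(\operatorname{epi}f)^\infty$, where $\operatorname{epi}f=\{(x,m)\in\mathbb R^N\times\mathbb R: f(x)\le m\}$. $\mathcal L=\{x\in\mathcal P^\infty: V_0^\infty(x)\le0,\ V_1(x)\in\mathcal A^\infty\}$, and $\mathcal C=\{(X,m)\in\mathcal X\times\mathbb R:\exists x\in\mathcal P \text{ with } V_0(x)\le m,\ X+V_1(x)\in\mathcal A\}$. *)

theory Defs
  imports "HOL-Analysis.Analysis"
begin

definition tvs :: "'a::{real_vector,topological_space} itself \<Rightarrow> bool" where
  "tvs _ \<longleftrightarrow> continuous_on UNIV (\<lambda>p::'a \<times> 'a. fst p + snd p)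
             \<and> continuous_on UNIV (\<lambda>p::real \<times> 'a. fst p *\<^sub>R snd p)"

definition cone_ge :: "'a::real_vector set \<Rightarrow> 'a \<Rightarrow> 'a \<Rightarrow> bool" where
  "cone_ge Xp X Y \<longleftrightarrow> X - Y \<in> Xp"

definition lsc :: "('a::topological_space \<Rightarrow> 'b::linorder) \<Rightarrow> bool" where
  "lsc f \<longleftrightarrow> (\<forall>x t. t < f x \<longrightarrow> eventually (\<lambda>y. t < f y) (nhds x))"

definition usc_cone_at :: "'a set \<Rightarrow> ('b::topological_space \<Rightarrow> 'a::{real_vector,topological_space}) \<Rightarrow> 'b \<Rightarrow> bool" where
  "usc_cone_at Xp V x \<longleftrightarrow>
     (\<forall>U. open U \<and> V x \<in> U \<longrightarrow>
        (\<exists>W. open W \<and> x \<in> W \<and> V ` W \<subseteq> {u - k | u k. u \<in> U \<and> k \<in> Xp}))"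

definition usc_cone :: "'a set \<Rightarrow> ('b::topological_space \<Rightarrow> 'a::{real_vector,topological_space}) \<Rightarrow> bool" where
  "usc_cone Xp V \<longleftrightarrow> (\<forall>x. usc_cone_at Xp V x)"

definition superlinear :: "'a::real_vector set \<Rightarrow> ('b::real_vector \<Rightarrow> 'a) \<Rightarrow> bool" where
  "superlinear Xp V \<longleftrightarrow>
     (\<forall>x y l. 0 \<le> l \<and> l \<le> 1 \<longrightarrow>
        cone_ge Xp (V (l *\<^sub>R x + (1 - l) *\<^sub>R y)) (l *\<^sub>R V x + (1 - l) *\<^sub>R V y))
   \<and> (\<forall>x l. 0 < l \<longrightarrow> V (l *\<^sub>R x) = l *\<^sub>R V x)"

definition anti_star_shaped :: "'a::real_vector set \<Rightarrow> ('b::real_vector \<Rightarrow> 'a) \<Rightarrow> bool" where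
  "anti_star_shaped Xp V \<longleftrightarrow>
     (\<forall>x l. 0 \<le> l \<and> l \<le> 1 \<longrightarrow> cone_ge Xp (V (l *\<^sub>R x)) (l *\<^sub>R V x))"

text \<open>Asymptotic cone via nets; a net (X_\<alpha>, \<lambda>_\<alpha>) is represented by the (proper) filter
  it induces on pairs (X, \<lambda>).\<close>
definition asymp_cone :: "'a::{real_vector,topological_space} set \<Rightarrow> 'a set" where
  "asymp_cone C = {X. \<exists>F :: ('a \<times> real) filter. F \<noteq> bot
      \<and> eventually (\<lambda>p. fst p \<in> C \<and> 0 \<le> snd p) F
      \<and> ((\<lambda>p. snd p) \<longlongrightarrow> 0) F
      \<and> ((\<lambda>p. snd p *\<^sub>R fst p) \<longlongrightarrow> X) F}"

definition asymp_fun :: "('a::{real_vector,topological_space} \<Rightarrow> real) \<Rightarrow> 'a \<Rightarrow> ereal" where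
  "asymp_fun f x = Inf (ereal ` {m. (x, m) \<in> asymp_cone (epigraph UNIV f)})"

definition rho :: "'n set \<Rightarrow> ('n \<Rightarrow> real) \<Rightarrow> ('n \<Rightarrow> 'a::real_vector) \<Rightarrow> 'a set \<Rightarrow> 'a \<Rightarrow> ereal" where
  "rho P V0 V1 A X = Inf (ereal ` (V0 ` {x \<in> P. X + V1 x \<in> A}))"

definition Lset :: "'n::{real_vector,topological_space} set \<Rightarrow> ('n \<Rightarrow> real) \<Rightarrow> ('n \<Rightarrow> 'a::{real_vector,topological_space}) \<Rightarrow> 'a set \<Rightarrow> 'n set" where
  "Lset P V0 V1 A = {x \<in> asymp_cone P. asymp_fun V0 x \<le> 0 \<and> V1 x \<in> asymp_cone A}"

definition Cset :: "'n set \<Rightarrow> ('n \<Rightarrow> real) \<Rightarrow> ('n \<Rightarrow> 'a::real_vector) \<Rightarrow> 'a set \<Rightarrow> ('a \<times> real) set" where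
  "Cset P V0 V1 A = {(X, m). \<exists>x \<in> P. V0 x \<le> m \<and> X + V1 x \<in> A}"

end

theory Submission
  imports Defs
begin


lemma tvs_add:
  fixes f g :: "'b \<Rightarrow> 'a::{real_vector,topological_space}"
  assumes "tvs TYPE('a)" "(f \<longlongrightarrow> a) F" "(g \<longlongrightarrow> b) F"
  shows "((\<lambda>x. f x + g x) \<longlongrightarrow> a + b) F"
proof -
  have c: "continuous_on UNIV (\<lambda>p::'a \<times> 'a. fst p + snd p)" using assms(1) unfolding tvs_def by auto
  have "((\<lambda>x. (f x, g x)) \<longlongrightarrow> (a, b)) F" using assms by (intro tendsto_Pair)
  from continuous_on_tendsto_compose[OF c this] show ?thesis by simp
qed

lemma tvs_scale:
  fixes f :: "'b \<Rightarrow> real" and g :: "'b \<Rightarrow> 'a::{real_vector,topological_space}"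
  assumes "tvs TYPE('a)" "(f \<longlongrightarrow> a) F" "(g \<longlongrightarrow> b) F"
  shows "((\<lambda>x. f x *\<^sub>R g x) \<longlongrightarrow> a *\<^sub>R b) F"
proof -
  have c: "continuous_on UNIV (\<lambda>p::real \<times> 'a. fst p *\<^sub>R snd p)" using assms(1) unfolding tvs_def by auto
  have "((\<lambda>x. (f x, g x)) \<longlongrightarrow> (a, b)) F" using assms by (intro tendsto_Pair)
  from continuous_on_tendsto_compose[OF c this] show ?thesis by simp
qed

lemma tvs_normed: "tvs TYPE('b::real_normed_vector)"
  unfolding tvs_def by (intro conjI continuous_intros)

lemma asymp_char:
  fixes X :: "'a::{real_vector,topological_space}"
  assumes H: "\<And>U e. open U \<Longrightarrow> X \<in> U \<Longrightarrow> e > 0 \<Longrightarrow> (\<exists>c\<in>C. \<exists>l. 0 \<le> l \<and> l \<le> e \<and> l *\<^sub>R c \<in> U)"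
  shows "X \<in> asymp_cone C"
proof -
  define B where "B = {(U, e). open U \<and> X \<in> U \<and> (e::real) > 0}"
  define G where "G = (\<lambda>(U,e). principal {q::'a \<times> real. fst q \<in> C \<and> 0 \<le> snd q \<and> snd q \<le> e \<and> snd q *\<^sub>R fst q \<in> U})"
  define F where "F = (INF b\<in>B. G b)"
  have Bne: "B \<noteq> {}" unfolding B_def by (auto intro!: exI[of _ UNIV] exI[of _ 1])
  have dir: "\<exists>x\<in>B. G x \<le> inf (G a) (G b)" if "a \<in> B" "b \<in> B" for a b
  proof -
    obtain U1 e1 U2 e2 where ab: "a = (U1,e1)" "b = (U2,e2)" by (cases a, cases b) auto
    show ?thesis using that unfolding ab B_def G_def
      by (intro bexI[of _ "(U1 \<inter> U2, min e1 e2)"]) auto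
  qed
  have ev: "eventually P F \<longleftrightarrow> (\<exists>b\<in>B. eventually P (G b))" for P
    unfolding F_def by (rule eventually_INF_base[OF Bne dir])
  have "F \<noteq> bot"
  proof
    assume "F = bot"
    then have "eventually (\<lambda>_. False) F" by simp
    then obtain U e where b: "(U,e) \<in> B" "eventually (\<lambda>_. False) (G (U,e))" unfolding ev by auto
    then have "open U" "X \<in> U" "e > 0" unfolding B_def by auto
    from H[OF this] obtain c l where "c \<in> C" "0 \<le> l" "l \<le> e" "l *\<^sub>R c \<in> U" by blast
    then show False using b(2) unfolding G_def by (auto simp: eventually_principal)
  qed
  moreover have "eventually (\<lambda>p. fst p \<in> C \<and> 0 \<le> snd p) F"
    unfolding ev by (rule bexI[of _ "(UNIV, 1)"]) (auto simp: B_def G_def eventually_principal)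
  moreover have "((\<lambda>p. snd p) \<longlongrightarrow> 0) F"
  proof (rule tendstoI)
    fix e :: real assume "e > 0"
    then show "eventually (\<lambda>p. dist (snd p) 0 < e) F"
      unfolding ev by (intro bexI[of _ "(UNIV, e/2)"]) (auto simp: B_def G_def eventually_principal)
  qed
  moreover have "((\<lambda>p. snd p *\<^sub>R fst p) \<longlongrightarrow> X) F"
  proof (rule topological_tendstoI)
    fix S assume "open S" "X \<in> S"
    then show "eventually (\<lambda>p. snd p *\<^sub>R fst p \<in> S) F"
      unfolding ev by (intro bexI[of _ "(S, 1)"]) (auto simp: B_def G_def eventually_principal)
  qed
  ultimately show ?thesis unfolding asymp_cone_def by blast
qed

lemma recession:
  fixes C :: "'a::{real_vector,topological_space} set"
  assumes tvs: "tvs TYPE('a)" and cl: "closed C" and cv: "convex C" and c: "c \<in> C"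
    and d: "d \<in> asymp_cone C"
  shows "c + d \<in> C"
proof -
  from d obtain F :: "('a \<times> real) filter" where F: "F \<noteq> bot"
    "eventually (\<lambda>p. fst p \<in> C \<and> 0 \<le> snd p) F" "((\<lambda>p. snd p) \<longlongrightarrow> 0) F"
    "((\<lambda>p. snd p *\<^sub>R fst p) \<longlongrightarrow> d) F" unfolding asymp_cone_def by blast
  have "eventually (\<lambda>p. snd p < 1) F" using F(3) by (rule order_tendstoD) simp
  with F(2) have ev: "eventually (\<lambda>p. (1 - snd p) *\<^sub>R c + snd p *\<^sub>R fst p \<in> C) F"
    by eventually_elim (use cv c in \<open>auto intro: convexD\<close>)
  have t1: "((\<lambda>p. (1 - snd p) *\<^sub>R c) \<longlongrightarrow> (1 - 0) *\<^sub>R c) F"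
    by (intro tvs_scale[OF tvs] tendsto_diff tendsto_const F(3))
  have "((\<lambda>p. (1 - snd p) *\<^sub>R c + snd p *\<^sub>R fst p) \<longlongrightarrow> (1 - 0) *\<^sub>R c + d) F"
    by (rule tvs_add[OF tvs t1 F(4)])
  then show ?thesis using Lim_in_closed_set[OF cl ev F(1)] by simp
qed


lemma tvs_add_nbhd:
  fixes a b :: "'a::{real_vector,topological_space}"
  assumes tvs: "tvs TYPE('a)" and Op: "open Ob" "a + b \<in> Ob"
  obtains A1 B1 where "open A1" "open B1" "a \<in> A1" "b \<in> B1" "\<And>x y. x \<in> A1 \<Longrightarrow> y \<in> B1 \<Longrightarrow> x + y \<in> Ob"
proof -
  have c: "continuous_on UNIV (\<lambda>p::'a \<times> 'a. fst p + snd p)" using tvs unfolding tvs_def by auto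
  have "open ((\<lambda>p::'a \<times> 'a. fst p + snd p) -` Ob \<inter> UNIV)"
    using continuous_on_open_vimage[OF open_UNIV, THEN iffD1, OF c] Op(1) by blast
  then have "open (UNIV \<inter> (\<lambda>p::'a \<times> 'a. fst p + snd p) -` Ob)" by (simp add: Int_commute)
  moreover have "(a, b) \<in> UNIV \<inter> (\<lambda>p::'a \<times> 'a. fst p + snd p) -` Ob" using Op by simp
  ultimately obtain A1 B1 where "open A1" "open B1" "(a,b) \<in> A1 \<times> B1" "A1 \<times> B1 \<subseteq> UNIV \<inter> (\<lambda>p::'a \<times> 'a. fst p + snd p) -` Ob"
    by (rule open_prod_elim)
  then show ?thesis using that by fastforce
qed

lemma snd_nhds_less: "eventually (\<lambda>q. snd q < t) (nhds (X::'a::topological_space, m))" if "m < (t::real)"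
proof -
  have "((\<lambda>q. snd q) \<longlongrightarrow> m) (nhds (X, m))" using tendsto_snd[OF filterlim_ident[of "nhds (X,m)"]] by simp
  then show ?thesis using that by (rule order_tendstoD(2))
qed

lemma tube:
  fixes Xp :: "'a::{real_vector,topological_space} set" and P :: "'n::topological_space set"
    and V0 :: "'n \<Rightarrow> real" and V1 :: "'n \<Rightarrow> 'a"
  assumes tvs: "tvs TYPE('a)" and clA: "closed A" and clP: "closed P" and lsc: "lsc V0"
    and usc: "usc_cone Xp V1" and Amono: "\<And>X K. X \<in> A \<Longrightarrow> K \<in> Xp \<Longrightarrow> X + K \<in> A"
    and K: "compact K" and nC: "(X, m) \<notin> Cset P V0 V1 A"
  shows "eventually (\<lambda>q. \<forall>y\<in>K. \<not> (y \<in> P \<and> V0 y \<le> snd q \<and> fst q + V1 y \<in> A)) (nhds (X, m))"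
proof -
  let ?Q = "\<lambda>W q. \<forall>z\<in>W. \<not> (z \<in> P \<and> V0 z \<le> snd q \<and> fst q + V1 z \<in> A)"
  have loc: "\<exists>W. open W \<and> y \<in> W \<and> eventually (?Q W) (nhds (X, m))" for y
  proof (cases "y \<in> P")
    case False
    then show ?thesis using clP by (intro exI[of _ "- P"]) (auto simp: open_Compl)
  next
    case yP: True
    show ?thesis
    proof (cases "m < V0 y")
      case True
      define t where "t = (m + V0 y) / 2"
      have "t < V0 y" using True by (simp add: t_def)
      then have "eventually (\<lambda>z. t < V0 z) (nhds y)" using lsc unfolding lsc_def by blast
      then obtain W where W: "open W" "y \<in> W" "\<And>z. z \<in> W \<Longrightarrow> t < V0 z" unfolding eventually_nhds by auto
      have "eventually (\<lambda>q. snd q < t) (nhds (X, m))" using True by (intro snd_nhds_less) (simp add: t_def)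
      then have "eventually (?Q W) (nhds (X, m))"
      proof eventually_elim
        case (elim q)
        show ?case
        proof (intro ballI notI)
          fix z assume "z \<in> W" "z \<in> P \<and> V0 z \<le> snd q \<and> fst q + V1 z \<in> A"
          moreover have "t < V0 z" using W(3) \<open>z \<in> W\<close> by blast
          ultimately show False using elim by linarith
        qed
      qed
      with W show ?thesis by blast
    next
      case False
      then have "X + V1 y \<notin> A" using nC yP unfolding Cset_def by auto
      then obtain A1 B1 where AB: "open A1" "open B1" "X \<in> A1" "V1 y \<in> B1"
        "\<And>x u. x \<in> A1 \<Longrightarrow> u \<in> B1 \<Longrightarrow> x + u \<in> - A"
        using tvs_add_nbhd[OF tvs, of "- A" X "V1 y"] clA by (auto simp: open_Compl)
      have "usc_cone_at Xp V1 y" using usc by (simp add: usc_cone_def)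
      from this[unfolded usc_cone_at_def, rule_format, of B1] AB(2,4)
      obtain W where W: "open W" "y \<in> W" "V1 ` W \<subseteq> {u - k | u k. u \<in> B1 \<and> k \<in> Xp}"
        by blast
      have "eventually (\<lambda>q. q \<in> A1 \<times> UNIV) (nhds (X, m))"
        using AB by (intro eventually_nhds_in_open) (auto simp: open_Times)
      then have "eventually (\<lambda>q. fst q \<in> A1) (nhds (X, m))" by eventually_elim auto
      then have "eventually (?Q W) (nhds (X, m))"
      proof eventually_elim
        case (elim q)
        show ?case
        proof (intro ballI notI)
          fix z assume z: "z \<in> W" and f: "z \<in> P \<and> V0 z \<le> snd q \<and> fst q + V1 z \<in> A"
          then obtain u k where uk: "V1 z = u - k" "u \<in> B1" "k \<in> Xp" using W by blast
          have "fst q + u = (fst q + V1 z) + k" using uk by (simp add: algebra_simps)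
          also have "\<dots> \<in> A" using f uk Amono by blast
          finally show False using AB(5)[OF elim uk(2)] by simp
        qed
      qed
      with W show ?thesis by blast
    qed
  qed
  have ex: "\<forall>y. \<exists>W. open W \<and> y \<in> W \<and> eventually (?Q W) (nhds (X, m))" using loc by blast
  from choice[OF ex] obtain W where W0: "\<forall>y. open (W y) \<and> y \<in> W y \<and> eventually (?Q (W y)) (nhds (X, m))"
    by blast
  then have W: "\<And>y. open (W y) \<and> y \<in> W y \<and> eventually (?Q (W y)) (nhds (X, m))" by blast
  obtain K' where K': "K' \<subseteq> K" "finite K'" "K \<subseteq> (\<Union>y\<in>K'. W y)"
  proof (rule compactE_image[OF K, of K W])
    show "open (W y)" if "y \<in> K" for y using W by blast
    show "K \<subseteq> (\<Union>y\<in>K. W y)" using W by blast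
  qed
  have "eventually (\<lambda>q. \<forall>y\<in>K'. ?Q (W y) q) (nhds (X, m))"
    using W by (intro eventually_ball_finite K'(2)) auto
  then show ?thesis
  proof eventually_elim
    case (elim q)
    show ?case
    proof
      fix y assume "y \<in> K"
      then obtain y' where "y' \<in> K'" "y \<in> W y'" using K'(3) by blast
      then show "\<not> (y \<in> P \<and> V0 y \<le> snd q \<and> fst q + V1 y \<in> A)" using elim by blast
    qed
  qed
qed



lemma closed_by_eventually:
  assumes "\<And>x. x \<notin> S \<Longrightarrow> eventually (\<lambda>y. y \<notin> S) (nhds x)"
  shows "closed S"
  unfolding closed_def
proof (subst open_subopen, intro ballI)
  fix x assume "x \<in> - S"
  then obtain T where "open T" "x \<in> T" "\<forall>y\<in>T. y \<notin> S" using assms unfolding eventually_nhds by blast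
  then show "\<exists>T. open T \<and> x \<in> T \<and> T \<subseteq> - S" by blast
qed

lemma cluster:
  assumes "inf (nhds d) (filtermap f F) \<noteq> bot" "open W" "d \<in> W" "eventually E F"
  shows "\<exists>q. E q \<and> f q \<in> W"
proof (rule ccontr)
  assume "\<not> ?thesis"
  then have "eventually (\<lambda>q. f q \<notin> W) F" using assms(4) by (auto elim: eventually_mono)
  then have e1: "eventually (\<lambda>z. z \<notin> W) (filtermap f F)" by (simp add: eventually_filtermap)
  have e2: "eventually (\<lambda>z. z \<in> W) (nhds d)" using assms(2,3) by (rule eventually_nhds_in_open)
  have "eventually (\<lambda>_. False) (inf (nhds d) (filtermap f F))"
    unfolding eventually_inf using e1 e2 by blast
  then show False using assms(1) by (simp add: eventually_False)
qed


lemma core: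
  fixes Xp :: "'a::{real_vector,topological_space} set" and P :: "(real^'n) set"
    and V0 :: "real^'n \<Rightarrow> real" and V1 :: "real^'n \<Rightarrow> 'a"
  assumes tvs: "tvs TYPE('a)" and cone: "convex_cone Xp" and clA: "closed A" and clP: "closed P"
    and lsc: "lsc V0" and usc: "usc_cone Xp V1" and Amono: "\<And>X K. X \<in> A \<Longrightarrow> K \<in> Xp \<Longrightarrow> X + K \<in> A"
    and star: "\<And>x t. t \<ge> 1 \<Longrightarrow> V1 ((1/t) *\<^sub>R x) - (1/t) *\<^sub>R V1 x \<in> Xp"
    and clS: "closed S" and Sscale: "\<And>z c. z \<in> S \<Longrightarrow> c > 0 \<Longrightarrow> c *\<^sub>R z \<in> S"
    and sel: "\<And>Y n. (Y, n) \<in> Cset P V0 V1 A \<Longrightarrow> \<exists>y\<in>S. y \<in> P \<and> V0 y \<le> n \<and> Y + V1 y \<in> A"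
    and fin: "\<And>d. d \<in> S \<Longrightarrow> d \<in> Lset P V0 V1 A \<Longrightarrow> d = 0"
  shows "closed (Cset P V0 V1 A)"
proof (rule closed_by_eventually, rule ccontr)
  let ?C = "Cset P V0 V1 A"
  fix p0 assume nC: "p0 \<notin> ?C" and ne: "\<not> eventually (\<lambda>q. q \<notin> ?C) (nhds p0)"
  obtain X m where p0: "p0 = (X, m)" by (cases p0)
  have nCXm: "(X, m) \<notin> ?C" using nC p0 by simp
  define F where "F = inf (nhds (X, m)) (principal ?C)"
  have Fnb: "F \<noteq> bot"
  proof
    assume "F = bot"
    then have "eventually (\<lambda>_. False) F" by simp
    then have "eventually (\<lambda>q. q \<in> ?C \<longrightarrow> False) (nhds (X, m))" unfolding F_def eventually_inf_principal .
    then show False using ne p0 by (auto elim: eventually_mono)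
  qed
  have evN: "eventually Q F" if "eventually Q (nhds (X, m))" for Q
    using that unfolding F_def by (rule filter_leD[OF inf_le1])
  have evC: "eventually (\<lambda>q. q \<in> ?C) F"
    unfolding F_def by (rule filter_leD[OF inf_le2]) (simp add: eventually_principal)
  define xs where "xs q = (SOME y. y \<in> S \<and> y \<in> P \<and> V0 y \<le> snd q \<and> fst q + V1 y \<in> A)" for q :: "'a \<times> real"
  have xs: "xs q \<in> S \<and> xs q \<in> P \<and> V0 (xs q) \<le> snd q \<and> fst q + V1 (xs q) \<in> A" if "q \<in> ?C" for q
  proof -
    obtain Y n where q: "q = (Y, n)" by (cases q)
    from sel[of Y n] that obtain y where "y \<in> S \<and> y \<in> P \<and> V0 y \<le> n \<and> Y + V1 y \<in> A" unfolding q by blast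
    then show ?thesis unfolding xs_def q fst_conv snd_conv by (rule someI)
  qed
  have evxs: "eventually (\<lambda>q. xs q \<in> S \<and> xs q \<in> P \<and> V0 (xs q) \<le> snd q \<and> fst q + V1 (xs q) \<in> A) F"
    using evC by eventually_elim (rule xs)
  have big: "eventually (\<lambda>q. B < norm (xs q)) F" for B
  proof -
    have "eventually (\<lambda>q. \<forall>y\<in>cball 0 B. \<not> (y \<in> P \<and> V0 y \<le> snd q \<and> fst q + V1 y \<in> A)) (nhds (X, m))"
      by (rule tube[OF tvs clA clP lsc usc _ compact_cball nCXm]) (simp add: Amono)
    from evN[OF this] evxs show ?thesis by eventually_elim (auto simp: not_le)
  qed
  define t where "t q = norm (xs q)" for q
  define ds where "ds q = (1 / t q) *\<^sub>R xs q" for q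
  have tpos: "eventually (\<lambda>q. 1 \<le> t q) F" using big[of 1] unfolding t_def by (auto elim: eventually_mono)
  have inv0: "((\<lambda>q. 1 / t q) \<longlongrightarrow> 0) F"
  proof (rule tendstoI)
    fix e :: real assume e: "e > 0"
    show "eventually (\<lambda>q. dist (1 / t q) 0 < e) F"
      using big[of "1/e"] tpos
    proof eventually_elim
      case (elim q)
      then have "1 / e < t q" unfolding t_def by simp
      then have "1 / t q < e" using e elim(2) by (simp add: field_simps)
      then show ?case using elim(2) by simp
    qed
  qed
  have fstX: "((\<lambda>q. fst q) \<longlongrightarrow> X) F"
    unfolding F_def by (rule tendsto_mono[OF inf_le1]) (rule tendsto_fst[OF filterlim_ident, of "(X,m)", simplified])
  have sndm: "((\<lambda>q. snd q) \<longlongrightarrow> m) F"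
    unfolding F_def by (rule tendsto_mono[OF inf_le1]) (rule tendsto_snd[OF filterlim_ident, of "(X,m)", simplified])
  have scX: "((\<lambda>q. (1 / t q) *\<^sub>R fst q) \<longlongrightarrow> 0) F"
    using tvs_scale[OF tvs inv0 fstX] by simp
  have scm: "((\<lambda>q. (1 / t q) * snd q) \<longlongrightarrow> 0) F"
    using tendsto_mult[OF inv0 sndm] by simp
  have sph: "eventually (\<lambda>z. z \<in> sphere 0 1) (filtermap ds F)"
    unfolding eventually_filtermap using tpos
    by eventually_elim (auto simp: ds_def t_def)
  have "filtermap ds F \<noteq> bot" using Fnb by (simp add: filtermap_bot_iff)
  with sph obtain d where d: "d \<in> sphere (0::real^'n) 1" "inf (nhds d) (filtermap ds F) \<noteq> bot"
    using compact_sphere[of "0::real^'n" 1] unfolding compact_filter by blast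
  note cl = cluster[OF d(2)]
  have dS: "d \<in> S"
  proof (rule ccontr)
    assume "d \<notin> S"
    have "eventually (\<lambda>q. xs q \<in> S \<and> 1 \<le> t q) F" using evxs tpos by eventually_elim auto
    from cl[OF _ _ this, of "- S"] \<open>d \<notin> S\<close> clS obtain q where
      "xs q \<in> S" "1 \<le> t q" "ds q \<in> - S" by (auto simp: open_Compl)
    then show False using Sscale[of "xs q" "1 / t q"] unfolding ds_def by auto
  qed
  have dP: "d \<in> asymp_cone P"
  proof (rule asymp_char)
    fix U and e :: real assume U: "open U" "d \<in> U" "e > 0"
    have "eventually (\<lambda>q. 1 / t q < e) F" using inv0 U(3) by (rule order_tendstoD(2))
    with evxs tpos have "eventually (\<lambda>q. xs q \<in> P \<and> 1 \<le> t q \<and> 1 / t q < e) F"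
      by eventually_elim auto
    from cl[OF U(1,2) this] obtain q where "xs q \<in> P" "1 \<le> t q" "1 / t q < e" "ds q \<in> U" by blast
    then show "\<exists>c\<in>P. \<exists>l. 0 \<le> l \<and> l \<le> e \<and> l *\<^sub>R c \<in> U"
      unfolding ds_def by (intro bexI[of _ "xs q"] exI[of _ "1 / t q"]) auto
  qed
  have dV0: "asymp_fun V0 d \<le> 0"
  proof -
    have "(d, 0) \<in> asymp_cone (epigraph UNIV V0)"
    proof (rule asymp_char)
      fix U :: "((real^'n) \<times> real) set" and e :: real assume U: "open U" "(d, 0) \<in> U" "e > 0"
      obtain U1 U2 where UU: "open U1" "open U2" "(d, 0) \<in> U1 \<times> U2" "U1 \<times> U2 \<subseteq> U"
        using open_prod_elim[OF U(1,2)] by blast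
      have "eventually (\<lambda>q. 1 / t q < e) F" using inv0 U(3) by (rule order_tendstoD(2))
      moreover have "eventually (\<lambda>q. (1 / t q) * snd q \<in> U2) F"
        using scm UU by (intro topological_tendstoD) auto
      ultimately have "eventually (\<lambda>q. V0 (xs q) \<le> snd q \<and> 1 \<le> t q \<and> 1 / t q < e \<and> (1 / t q) * snd q \<in> U2) F"
        using evxs tpos by eventually_elim auto
      from cl[OF UU(1) _ this] UU(3) obtain q where
        q: "V0 (xs q) \<le> snd q" "1 \<le> t q" "1 / t q < e" "(1 / t q) * snd q \<in> U2" "ds q \<in> U1" by auto
      show "\<exists>c\<in>epigraph UNIV V0. \<exists>l. 0 \<le> l \<and> l \<le> e \<and> l *\<^sub>R c \<in> U"
      proof (intro bexI[of _ "(xs q, snd q)"] exI[of _ "1 / t q"] conjI)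
        show "(1 / t q) *\<^sub>R (xs q, snd q) \<in> U" using q UU(4) unfolding ds_def by auto
      qed (use q in \<open>auto simp: mem_epigraph\<close>)
    qed
    then have "ereal 0 \<in> ereal ` {m. (d, m) \<in> asymp_cone (epigraph UNIV V0)}" by auto
    then show ?thesis unfolding asymp_fun_def by (metis Inf_lower zero_ereal_def)
  qed
  have dA: "V1 d \<in> asymp_cone A"
  proof (rule asymp_char)
    fix U :: "'a set" and e :: real assume U: "open U" "V1 d \<in> U" "e > 0"
    obtain U1 N where UN: "open U1" "open N" "V1 d \<in> U1" "0 \<in> N" "\<And>x y. x \<in> U1 \<Longrightarrow> y \<in> N \<Longrightarrow> x + y \<in> U"
      using tvs_add_nbhd[OF tvs U(1), of "V1 d" 0] U(2) by auto
    have "usc_cone_at Xp V1 d" using usc by (simp add: usc_cone_def)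
    from this[unfolded usc_cone_at_def, rule_format, of U1] UN(1,3)
    obtain W where W: "open W" "d \<in> W" "V1 ` W \<subseteq> {u - k | u k. u \<in> U1 \<and> k \<in> Xp}"
      by blast
    have "eventually (\<lambda>q. 1 / t q < e) F" using inv0 U(3) by (rule order_tendstoD(2))
    moreover have "eventually (\<lambda>q. (1 / t q) *\<^sub>R fst q \<in> N) F"
      using scX UN by (intro topological_tendstoD) auto
    ultimately have "eventually (\<lambda>q. fst q + V1 (xs q) \<in> A \<and> 1 \<le> t q \<and> 1 / t q < e \<and> (1 / t q) *\<^sub>R fst q \<in> N) F"
      using evxs tpos by eventually_elim auto
    from cl[OF W(1,2) this] obtain q where
      q: "fst q + V1 (xs q) \<in> A" "1 \<le> t q" "1 / t q < e" "(1 / t q) *\<^sub>R fst q \<in> N" "ds q \<in> W" by auto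
    then obtain u k where uk: "V1 (ds q) = u - k" "u \<in> U1" "k \<in> Xp" using W(3) by blast
    define j where "j = V1 (ds q) - (1 / t q) *\<^sub>R V1 (xs q)"
    have j: "j \<in> Xp" unfolding j_def ds_def using star[OF q(2)] .
    define a where "a = fst q + V1 (xs q) + t q *\<^sub>R (j + k)"
    have aA: "a \<in> A" unfolding a_def
      using Amono[OF q(1)] convex_cone_scaleR[OF cone _ convex_cone_add[OF cone j uk(3)], of "t q"] q(2) by simp
    have tq: "t q > 0" using q(2) by simp
    have "(1 / t q) *\<^sub>R a = (1 / t q) *\<^sub>R fst q + ((1 / t q) *\<^sub>R V1 (xs q) + j) + k"
      unfolding a_def using tq by (simp add: algebra_simps)
    also have "\<dots> = u + (1 / t q) *\<^sub>R fst q" unfolding j_def using uk(1) by (simp add: algebra_simps)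
    finally have "(1 / t q) *\<^sub>R a \<in> U" using UN(5)[OF uk(2) q(4)] by simp
    then show "\<exists>c\<in>A. \<exists>l. 0 \<le> l \<and> l \<le> e \<and> l *\<^sub>R c \<in> U"
      using aA q(3) tq by (intro bexI[of _ a] exI[of _ "1 / t q"]) auto
  qed
  have "d \<in> Lset P V0 V1 A" unfolding Lset_def using dP dV0 dA by simp
  from fin[OF dS this] d(1) show False by simp
qed



lemma closed_epigraph_lsc:
  fixes V0 :: "'b::topological_space \<Rightarrow> real"
  assumes "lsc V0" shows "closed (epigraph UNIV V0)"
proof (rule closed_by_eventually)
  fix p assume p: "p \<notin> epigraph UNIV V0"
  obtain x m where px: "p = (x, m)" by (cases p)
  then have lt: "m < V0 x" using p by (simp add: mem_epigraph)
  define s where "s = (m + V0 x) / 2"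
  have "s < V0 x" using lt by (simp add: s_def)
  then have "eventually (\<lambda>z. s < V0 z) (nhds x)" using assms unfolding lsc_def by blast
  then obtain W where W: "open W" "x \<in> W" "\<And>z. z \<in> W \<Longrightarrow> s < V0 z" unfolding eventually_nhds by auto
  have "m < s" using lt by (simp add: s_def)
  then have "eventually (\<lambda>q. q \<in> W \<times> {..<s}) (nhds p)"
    unfolding px using W by (intro eventually_nhds_in_open) (auto simp: open_Times)
  then show "eventually (\<lambda>q. q \<notin> epigraph UNIV V0) (nhds p)"
    by eventually_elim (auto simp: mem_epigraph dest!: W(3))
qed

lemma shift_V0:
  fixes V0 :: "real^'n \<Rightarrow> real"
  assumes cv: "convex_on UNIV V0" and lsc: "lsc V0" and h: "asymp_fun V0 h \<le> 0"
  shows "V0 (y + h) \<le> V0 y"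
proof -
  have cl: "closed (epigraph UNIV V0)" by (rule closed_epigraph_lsc[OF lsc])
  have cx: "convex (epigraph UNIV V0)" using cv by (simp add: convex_epigraph)
  have tv: "tvs TYPE((real^'n) \<times> real)" by (rule tvs_normed)
  have "V0 (y + h) \<le> V0 y + e" if e: "e > 0" for e
  proof -
    have "Inf (ereal ` {m. (h, m) \<in> asymp_cone (epigraph UNIV V0)}) < ereal e"
    proof -
      have "(0::ereal) < ereal e" using e by simp
      then show ?thesis using h unfolding asymp_fun_def by (rule le_less_trans[rotated])
    qed
    then obtain m' where m': "(h, m') \<in> asymp_cone (epigraph UNIV V0)" "m' < e"
      unfolding Inf_less_iff by auto
    have "(y, V0 y) + (h, m') \<in> epigraph UNIV V0"
      by (rule recession[OF tv cl cx _ m'(1)]) (simp add: mem_epigraph)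
    then have "V0 (y + h) \<le> V0 y + m'" by (simp add: mem_epigraph)
    then show ?thesis using m'(2) by linarith
  qed
  then show ?thesis by (meson field_le_epsilon)
qed


lemma shift_feasible:
  fixes Xp :: "'a::{real_vector,topological_space} set" and P :: "(real^'n) set"
    and V0 :: "real^'n \<Rightarrow> real" and V1 :: "real^'n \<Rightarrow> 'a"
  assumes tvs: "tvs TYPE('a)" and Amono: "\<And>X K. X \<in> A \<Longrightarrow> K \<in> Xp \<Longrightarrow> X + K \<in> A"
    and h: "convex A \<and> closed A \<and> convex P \<and> closed P \<and> convex_on UNIV V0 \<and> lsc V0 \<and> superlinear Xp V1"
    and hL: "h \<in> Lset P V0 V1 A"
    and y: "y \<in> P" "V0 y \<le> n" "Y + V1 y \<in> A"
  shows "y + h \<in> P \<and> V0 (y + h) \<le> n \<and> Y + V1 (y + h) \<in> A"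
proof (intro conjI)
  have hh: "h \<in> asymp_cone P" "asymp_fun V0 h \<le> 0" "V1 h \<in> asymp_cone A" using hL unfolding Lset_def by auto
  show "y + h \<in> P" using recession[OF tvs_normed _ _ y(1) hh(1)] h by auto
  show "V0 (y + h) \<le> n" using shift_V0[of V0 h y] h hh(2) y(2) by auto
  have sl: "superlinear Xp V1" using h by simp
  have "cone_ge Xp (V1 ((1/2) *\<^sub>R (2 *\<^sub>R y) + (1 - 1/2) *\<^sub>R (2 *\<^sub>R h)))
      ((1/2) *\<^sub>R V1 (2 *\<^sub>R y) + (1 - 1/2) *\<^sub>R V1 (2 *\<^sub>R h))"
  proof -
    have conc: "\<forall>x y l. 0 \<le> l \<and> l \<le> 1 \<longrightarrow> cone_ge Xp (V1 (l *\<^sub>R x + (1 - l) *\<^sub>R y)) (l *\<^sub>R V1 x + (1 - l) *\<^sub>R V1 y)"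
      using sl unfolding superlinear_def by blast
    show ?thesis using conc[rule_format, of "1/2" "2 *\<^sub>R y" "2 *\<^sub>R h"] by simp
  qed
  moreover have "V1 (2 *\<^sub>R y) = 2 *\<^sub>R V1 y" "V1 (2 *\<^sub>R h) = 2 *\<^sub>R V1 h"
    using sl unfolding superlinear_def by auto
  ultimately have k: "V1 (y + h) - (V1 y + V1 h) \<in> Xp" by (simp add: cone_ge_def scaleR_add_right[symmetric])
  have "Y + V1 y + V1 h \<in> A" using recession[OF tvs _ _ y(3) hh(3)] h by auto
  from Amono[OF this k] show "Y + V1 (y + h) \<in> A" by (simp add: algebra_simps)
qed

theorem mainTheorem14:
  fixes Xp :: "'a::{real_vector,topological_space} set"
    and P :: "(real^'n) set"
    and V0 :: "real^'n \<Rightarrow> real"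
    and V1 :: "real^'n \<Rightarrow> 'a"
    and A :: "'a set"
  assumes tvs: "tvs TYPE('a)"
    and cone: "convex_cone Xp"
    and P0: "0 \<in> P"
    and V00: "V0 0 = 0"
    and V0sym: "\<And>x. V0 x \<ge> - V0 (- x)"
    and V10: "V1 0 = 0"
    and V1sym: "\<And>x. cone_ge Xp (- V1 (- x)) (V1 x)"
    and A0: "0 \<in> A"
    and Amono: "\<And>X K. X \<in> A \<Longrightarrow> K \<in> Xp \<Longrightarrow> X + K \<in> A"
    and hyp: "(convex A \<and> closed A \<and> convex P \<and> closed P \<and> convex_on UNIV V0 \<and> lsc V0
               \<and> superlinear Xp V1 \<and> usc_cone Xp V1 \<and> subspace (Lset P V0 V1 A))
            \<or> (closed A \<and> closed P \<and> lsc V0 \<and> anti_star_shaped Xp V1 \<and> usc_cone Xp V1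
               \<and> Lset P V0 V1 A = {0})
            \<or> (closed A \<and> compact P \<and> lsc V0 \<and> usc_cone Xp V1 \<and> Lset P V0 V1 A = {0})"
  shows "closed (Cset P V0 V1 A) \<and> lsc (rho P V0 V1 A)
       \<and> (\<forall>X. \<bar>rho P V0 V1 A X\<bar> \<noteq> \<infinity> \<longrightarrow>
             (\<exists>x \<in> P. X + V1 x \<in> A \<and> rho P V0 V1 A X = ereal (V0 x)))"
proof -
  let ?C = "Cset P V0 V1 A"
  let ?L = "Lset P V0 V1 A"
  have X0: "0 \<in> Xp" using cone by (simp add: convex_cone_iff)
  have selU: "\<exists>y\<in>UNIV. y \<in> P \<and> V0 y \<le> n \<and> Y + V1 y \<in> A" if "(Y, n) \<in> ?C" for Y n
    using that unfolding Cset_def by auto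
  have clC: "closed ?C"
    using hyp
  proof (elim disjE conjE)
    assume h: "convex A" "closed A" "convex P" "closed P" "convex_on UNIV V0" "lsc V0"
      "superlinear Xp V1" "usc_cone Xp V1" "subspace ?L"
    define S where "S = {z. \<forall>w\<in>?L. inner w z = 0}"
    have clS: "closed S" unfolding S_def Collect_ball_eq[symmetric]
    proof -
      have "{z. \<forall>w\<in>?L. inner w z = 0} = (\<Inter>w\<in>?L. {z. inner w z = 0})" by auto
      then show "closed {z. \<forall>w\<in>?L. inner w z = 0}" by (auto intro!: closed_INT closed_hyperplane)
    qed
    show ?thesis
    proof (rule core[OF tvs cone h(2) h(4) h(6) h(8) _ _ clS])
      show "X + K \<in> A" if "X \<in> A" "K \<in> Xp" for X K using Amono that .
      show "V1 ((1 / t) *\<^sub>R x) - (1 / t) *\<^sub>R V1 x \<in> Xp" if "1 \<le> t" for x and t :: real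
        using h(7) that X0 unfolding superlinear_def by auto
      show "c *\<^sub>R z \<in> S" if "z \<in> S" "0 < c" for z c using that unfolding S_def by auto
      show "d = 0" if "d \<in> S" "d \<in> ?L" for d
        using that unfolding S_def by auto
      show "\<exists>y\<in>S. y \<in> P \<and> V0 y \<le> n \<and> Y + V1 y \<in> A" if "(Y, n) \<in> ?C" for Y n
      proof -
        have "\<exists>y\<in>P. V0 y \<le> n \<and> Y + V1 y \<in> A" using that unfolding Cset_def by simp
        then obtain y where y: "y \<in> P" "V0 y \<le> n" "Y + V1 y \<in> A" by blast
        obtain l z where lz: "l \<in> span ?L" "\<And>w. w \<in> span ?L \<Longrightarrow> orthogonal z w" "y = l + z"
          using orthogonal_subspace_decomp_exists[of ?L y] by metis
        have lL: "l \<in> ?L" using lz(1) h(9) by (metis span_eq_iff)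
        then have mL: "- l \<in> ?L" using h(9) by (simp add: subspace_neg)
        have "y + - l \<in> P \<and> V0 (y + - l) \<le> n \<and> Y + V1 (y + - l) \<in> A"
          by (rule shift_feasible[OF tvs Amono _ mL y]) (use h in auto)
        moreover have "y + - l = z" using lz(3) by simp
        moreover have "z \<in> S" unfolding S_def
          using lz(2) span_base by (auto simp: orthogonal_def inner_commute)
        ultimately show ?thesis by auto
      qed
    qed
  next
    assume h: "closed A" "closed P" "lsc V0" "anti_star_shaped Xp V1" "usc_cone Xp V1" "?L = {0}"
    show ?thesis
    proof (rule core[OF tvs cone h(1) h(2) h(3) h(5) _ _ closed_UNIV _ selU])
      show "X + K \<in> A" if "X \<in> A" "K \<in> Xp" for X K using Amono that .
      show "V1 ((1 / t) *\<^sub>R x) - (1 / t) *\<^sub>R V1 x \<in> Xp" if "1 \<le> t" for x and t :: real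
        using h(4) that unfolding anti_star_shaped_def cone_ge_def by auto
    qed (use h(6) in auto)
  next
    assume h: "closed A" "compact P" "lsc V0" "usc_cone Xp V1" "?L = {0}"
    have clP: "closed P" using h(2) by (rule compact_imp_closed)
    show ?thesis
    proof (rule closed_by_eventually)
      fix p assume p: "p \<notin> ?C"
      obtain X m where px: "p = (X, m)" by (cases p)
      have "eventually (\<lambda>q. \<forall>y\<in>P. \<not> (y \<in> P \<and> V0 y \<le> snd q \<and> fst q + V1 y \<in> A)) (nhds (X, m))"
        by (rule tube[OF tvs h(1) clP h(3) h(4) _ h(2)]) (use p px Amono in auto)
      then show "eventually (\<lambda>q. q \<notin> ?C) (nhds p)"
        unfolding px by eventually_elim (auto simp: Cset_def)
    qed
  qed
  have att: "\<exists>x \<in> P. X + V1 x \<in> A \<and> rho P V0 V1 A X = ereal (V0 x)"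
    if fin: "\<bar>rho P V0 V1 A X\<bar> \<noteq> \<infinity>" for X
  proof -
    obtain r where r: "rho P V0 V1 A X = ereal r" using fin by (cases "rho P V0 V1 A X") auto
    have inC: "(X, r + inverse (real (Suc k))) \<in> ?C" for k
    proof -
      have "ereal r < ereal (r + inverse (real (Suc k)))" by simp
      then have "Inf (ereal ` (V0 ` {x \<in> P. X + V1 x \<in> A})) < ereal (r + inverse (real (Suc k)))"
        using r unfolding rho_def by simp
      then obtain x where "x \<in> P" "X + V1 x \<in> A" "V0 x < r + inverse (real (Suc k))"
        unfolding Inf_less_iff by auto
      then show ?thesis unfolding Cset_def by (auto intro!: bexI[of _ x] less_imp_le)
    qed
    have lim: "((\<lambda>k. (X, r + inverse (real (Suc k)))) \<longlongrightarrow> (X, r)) sequentially"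
      using tendsto_Pair[OF tendsto_const tendsto_add[OF tendsto_const LIMSEQ_inverse_real_of_nat]] by simp
    have "(X, r) \<in> ?C" using Lim_in_closed_set[OF clC _ _ lim] inC by simp
    then obtain x where x: "x \<in> P" "V0 x \<le> r" "X + V1 x \<in> A" unfolding Cset_def by auto
    have "rho P V0 V1 A X \<le> ereal (V0 x)" unfolding rho_def using x by (auto intro!: Inf_lower)
    moreover have "ereal (V0 x) \<le> rho P V0 V1 A X" using r x by simp
    ultimately show ?thesis using x by (intro bexI[of _ x]) auto
  qed
  have lscr: "lsc (rho P V0 V1 A)" unfolding lsc_def
  proof (intro allI impI)
    fix X and t :: ereal assume t: "t < rho P V0 V1 A X"
    obtain s where s: "t < ereal s" "ereal s < rho P V0 V1 A X" using ereal_dense2[OF t] by blast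
    have nC: "(X, s) \<notin> ?C"
    proof
      assume "(X, s) \<in> ?C"
      then obtain x where x: "x \<in> P" "V0 x \<le> s" "X + V1 x \<in> A" unfolding Cset_def by auto
      then have "rho P V0 V1 A X \<le> ereal (V0 x)" unfolding rho_def by (auto intro!: Inf_lower)
      from s(2) this have "ereal s < ereal (V0 x)" by (rule less_le_trans)
      then show False using x(2) by simp
    qed
    have "open (- ?C)" using clC by (simp add: open_Compl)
    then obtain A1 B1 where AB: "open A1" "open B1" "(X, s) \<in> A1 \<times> B1" "A1 \<times> B1 \<subseteq> - ?C"
      using nC by (metis ComplI open_prod_elim)
    have "eventually (\<lambda>Y. Y \<in> A1) (nhds X)" using AB by (intro eventually_nhds_in_open) auto
    then show "eventually (\<lambda>Y. t < rho P V0 V1 A Y) (nhds X)"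
    proof eventually_elim
      case (elim Y)
      have YC: "(Y, s) \<notin> ?C" using AB elim by auto
      have "ereal s \<le> rho P V0 V1 A Y" unfolding rho_def
      proof (rule Inf_greatest)
        fix z assume "z \<in> ereal ` V0 ` {x \<in> P. Y + V1 x \<in> A}"
        then obtain x where x: "x \<in> P" "Y + V1 x \<in> A" "z = ereal (V0 x)" by auto
        have "\<not> V0 x \<le> s" using YC x unfolding Cset_def by auto
        then show "ereal s \<le> z" using x(3) by simp
      qed
      then show ?case using s(1) by simp
    qed
  qed
  show ?thesis using clC lscr att by blast
qed


end
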